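(* Let $f$ be a smooth function on $S^n$ and let $u$ be a smooth positive solution of the conformal mean curvature flow on $[0,T)$ for some $T>0$, with initial data $u_0$ satisfying $\int_{S^n} f u_0^{2^\#}\,d\mu_{S^n}>0$. Then $\int_{S^n} f u(t)^{2^\#}\,d\mu_{S^n}>0$ for all $t\in[0,T)$.
   Context: Setting: $n\ge2$, $B^{n+1}$ the unit ball with Euclidean metric $g_e$, $S^n=\partial B^{n+1}$ with round volume form $d\mu_{S^n}$ and volume $\omega_n$; $2^\#=\frac{2n}{n-1}$, $a_n=\frac{2}{n-1}$, $\partial/\partial\eta_e$ the outward normal derivative. For positive smooth $u$ on $\overline{B^{n+1}}$ with $\Delta_{g_e}u=0$, the metric $g=u^{4/(n-1)}g_e$ is scalar-flat, has boundary mean curvature $H=u^{-\frac{n+1}{n-1}}\big(a_n\frac{\partial u}{\partial\eta_e}+u\big)$ and boundary volume form $d\mu_g=u^{2^\#}d\mu_{S^n}$. Define $E[u]=\frac{1}{\omega_n}\int_{B^{n+1}}a_n|\nabla u|^2\,dV_{g_e}+\frac{1}{\omega_n}\int_{S^n}u^2\,d\mu_{S^n}$ and $E_f[u]=E[u]\big/\big(\frac{1}{\omega_n}\int_{S^n}fu^{2^\#}d\mu_{S^n}\big)^{(n-1)/n}$. The conformal mean curvature flow is a family $u(t)>0$ of smooth functions on $\overline{B^{n+1}}$ with $\Delta_{g_e}u(t)=0$ in $B^{n+1}$, $\partial_t u=-\frac{n-1}{4}(H-\lambda(t)f)u$ on $S^n$, $u(0)=u_0$, where $\lambda(t)=E[u(t)]\big/\big(\frac{1}{\omega_n}\int_{S^n}fu(t)^{2^\#}d\mu_{S^n}\big)$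 and $H=H(t)$ is the mean curvature of $g(t)=u(t)^{4/(n-1)}g_e$. *)

theory Defs
  imports "HOL-Analysis.Analysis"
begin

fun dirderiv :: "'a::real_normed_vector list \<Rightarrow> ('a \<Rightarrow> real) \<Rightarrow> 'a \<Rightarrow> real" where
  "dirderiv [] g = g"
| "dirderiv (v # vs) g = (\<lambda>x. frechet_derivative (dirderiv vs g) (at x) v)"

definition smooth_on :: "'a::real_normed_vector set \<Rightarrow> ('a \<Rightarrow> real) \<Rightarrow> bool" where
  "smooth_on U g \<longleftrightarrow> open U \<and> (\<forall>vs. \<forall>x\<in>U. dirderiv vs g differentiable (at x))"

definition grad_sq :: "('a::euclidean_space \<Rightarrow> real) \<Rightarrow> 'a \<Rightarrow> real" where
  "grad_sq g x = (\<Sum>b\<in>Basis. (frechet_derivative g (at x) b)^2)"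

definition laplacian :: "('a::euclidean_space \<Rightarrow> real) \<Rightarrow> 'a \<Rightarrow> real" where
  "laplacian g x = (\<Sum>b\<in>Basis. frechet_derivative (\<lambda>y. frechet_derivative g (at y) b) (at x) b)"

text \<open>Outward normal derivative on the unit sphere: the normal at x is x itself.\<close>
definition normal_deriv :: "('a::euclidean_space \<Rightarrow> real) \<Rightarrow> 'a \<Rightarrow> real" where
  "normal_deriv g x = frechet_derivative g (at x) x"

text \<open>Integral against the round (surface) measure of the unit sphere of 'a, given via the
  cone construction: int_S g d mu = DIM('a) * int_B g(x/|x|) dx.\<close>
definition sphere_int :: "('a::euclidean_space \<Rightarrow> real) \<Rightarrow> real" where
  "sphere_int g = real DIM('a) * (LINT x:ball 0 1|lborel. g (x /\<^sub>R norm x))"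

definition omega :: "'a::euclidean_space itself \<Rightarrow> real" where
  "omega _ = sphere_int (\<lambda>_::'a. 1)"

definition ball_int :: "('a::euclidean_space \<Rightarrow> real) \<Rightarrow> real" where
  "ball_int g = (LINT x:ball 0 1|lborel. g x)"

definition crit_exp :: "nat \<Rightarrow> real" where
  "crit_exp n = 2 * real n / (real n - 1)"

definition a_const :: "nat \<Rightarrow> real" where
  "a_const n = 2 / (real n - 1)"

definition energy :: "nat \<Rightarrow> ('a::euclidean_space \<Rightarrow> real) \<Rightarrow> real" where
  "energy n u = (1 / omega TYPE('a)) * ball_int (\<lambda>x. a_const n * grad_sq u x)
              + (1 / omega TYPE('a)) * sphere_int (\<lambda>x. (u x)^2)"

definition f_integral :: "nat \<Rightarrow> ('a::euclidean_space \<Rightarrow> real) \<Rightarrow> ('a \<Rightarrow> real) \<Rightarrow> real" where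
  "f_integral n f u = sphere_int (\<lambda>x. f x * u x powr crit_exp n)"

definition mean_curv :: "nat \<Rightarrow> ('a::euclidean_space \<Rightarrow> real) \<Rightarrow> 'a \<Rightarrow> real" where
  "mean_curv n u x = u x powr (- (real n + 1) / (real n - 1)) * (a_const n * normal_deriv u x + u x)"

definition lambda_coef :: "nat \<Rightarrow> ('a::euclidean_space \<Rightarrow> real) \<Rightarrow> ('a \<Rightarrow> real) \<Rightarrow> real" where
  "lambda_coef n f u = energy n u / ((1 / omega TYPE('a)) * f_integral n f u)"

text \<open>u is a smooth positive solution of the conformal mean curvature flow on [0,T) with
  initial datum u 0.  Smoothness is joint in (t,x) up to the boundary of the ball and up to t = 0
  (expressed as smoothness on an open neighbourhood of [0,T) x closed ball).\<close>
definition cmcf_solution :: "nat \<Rightarrow> ('a::euclidean_space \<Rightarrow> real) \<Rightarrow> real \<Rightarrow> (real \<Rightarrow> 'a \<Rightarrow> real) \<Rightarrow> bool" where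
  "cmcf_solution n f T u \<longleftrightarrow>
     (\<exists>U. {0..<T} \<times> cball 0 1 \<subseteq> U \<and> smooth_on U (\<lambda>(t, x). u t x))
   \<and> (\<forall>t\<in>{0..<T}. \<forall>x\<in>cball 0 1. u t x > 0)
   \<and> (\<forall>t\<in>{0..<T}. \<forall>x\<in>ball 0 1. laplacian (u t) x = 0)
   \<and> (\<forall>t\<in>{0..<T}. \<forall>x\<in>sphere 0 1.
        ((\<lambda>s. u s x) has_real_derivative
           (- (real n - 1) / 4 * (mean_curv n (u t) x - lambda_coef n f (u t) * f x) * u t x))
        (at t within {0..<T}))"

end

theory Submission
  imports Defs
begin


lemma cone_meas:
  fixes h :: "'a::euclidean_space \<Rightarrow> real"
  assumes "continuous_on (sphere 0 1) h"
  shows "(\<lambda>x. indicator (ball 0 1) x *\<^sub>R h (x /\<^sub>R norm x)) \<in> borel_measurable lborel"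
proof -
  have c: "continuous_on (ball 0 1 - {0}) (\<lambda>x. h (x /\<^sub>R norm x))"
    by (rule continuous_on_compose2[OF assms]) (auto intro!: continuous_intros simp: field_simps split: if_splits)
  have m1: "(\<lambda>x. indicator (ball 0 1 - {0}) x *\<^sub>R h (x /\<^sub>R norm x)) \<in> borel_measurable borel"
    by (rule borel_measurable_continuous_on_indicator[OF _ c]) auto
  have m2: "(\<lambda>x::'a. indicator {0} x *\<^sub>R h 0) \<in> borel_measurable borel"
    by measurable
  have eq: "(\<lambda>x. indicator (ball 0 1) x *\<^sub>R h (x /\<^sub>R norm x)) =
     (\<lambda>x. indicator (ball 0 1 - {0}) x *\<^sub>R h (x /\<^sub>R norm x) + indicator {0} x *\<^sub>R h 0)"
    by (auto simp: indicator_def)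
  show ?thesis unfolding eq using m1 m2 by simp
qed

lemma cone_int:
  fixes h :: "'a::euclidean_space \<Rightarrow> real"
  assumes "continuous_on (sphere 0 1) h"
  shows "integrable lborel (\<lambda>x. indicator (ball 0 1) x *\<^sub>R h (x /\<^sub>R norm x))"
proof -
  obtain B where B0: "\<forall>y \<in> sphere (0::'a) 1. norm (h y) \<le> B"
    using compact_imp_bounded[OF compact_continuous_image[OF assms compact_sphere]]
    unfolding bounded_iff by auto
  have B: "\<And>y. y \<in> sphere (0::'a) 1 \<Longrightarrow> norm (h y) \<le> B" using B0 by blast
  have i: "integrable lborel (\<lambda>x::'a. indicator (ball 0 1) x * B)"
    by (intro integrable_mult_left integrable_real_indicator) (auto simp: emeasure_bounded_finite[OF bounded_ball, simplified])
  show ?thesis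
  proof (rule Bochner_Integration.integrable_bound[OF i cone_meas[OF assms]])
    show "AE x in lborel. norm (indicator (ball 0 1) x *\<^sub>R h (x /\<^sub>R norm x)) \<le> norm (indicator (ball 0 1) x * B)"
      using AE_lborel_singleton[of 0]
    proof eventually_elim
      fix x :: 'a assume "x \<noteq> 0"
      show "norm (indicator (ball 0 1) x *\<^sub>R h (x /\<^sub>R norm x)) \<le> norm (indicator (ball 0 1) x * B)"
      proof (cases "x \<in> ball 0 1")
        case True
        then have "x /\<^sub>R norm x \<in> sphere 0 1" using \<open>x \<noteq> 0\<close> by auto
        from B[OF this] show ?thesis using True by auto
      qed (auto simp: indicator_def)
    qed
  qed
qed


lemma sphere_int_alt: "sphere_int h = real DIM('a) * integral\<^sup>L lborel (\<lambda>x. indicator (ball 0 1) x *\<^sub>R h (x /\<^sub>R norm x))"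
  for h :: "'a::euclidean_space \<Rightarrow> real"
  unfolding sphere_int_def set_lebesgue_integral_def by simp

lemma sphere_int_cong:
  fixes h k :: "'a::euclidean_space \<Rightarrow> real"
  assumes "\<And>x. x \<in> sphere 0 1 \<Longrightarrow> h x = k x"
    and "continuous_on (sphere 0 1) h" "continuous_on (sphere 0 1) k"
  shows "sphere_int h = sphere_int k"
proof -
  have "integral\<^sup>L lborel (\<lambda>x. indicator (ball 0 1) x *\<^sub>R h (x /\<^sub>R norm x)) = 
        integral\<^sup>L lborel (\<lambda>x. indicator (ball 0 1) x *\<^sub>R k (x /\<^sub>R norm x))"
    using AE_lborel_singleton[of 0]
    by (intro integral_cong_AE) (auto elim!: eventually_mono simp: assms cone_meas[OF assms(2), simplified] cone_meas[OF assms(3), simplified])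
  then show ?thesis by (simp add: sphere_int_alt)
qed

lemma sphere_int_mono:
  fixes h k :: "'a::euclidean_space \<Rightarrow> real"
  assumes "\<And>x. x \<in> sphere 0 1 \<Longrightarrow> h x \<le> k x"
    and "continuous_on (sphere 0 1) h" "continuous_on (sphere 0 1) k"
  shows "sphere_int h \<le> sphere_int k"
proof -
  have "integral\<^sup>L lborel (\<lambda>x. indicator (ball 0 1) x *\<^sub>R h (x /\<^sub>R norm x)) \<le>
        integral\<^sup>L lborel (\<lambda>x. indicator (ball 0 1) x *\<^sub>R k (x /\<^sub>R norm x))"
  proof (rule integral_mono_AE[OF cone_int[OF assms(2)] cone_int[OF assms(3)]])
    show "AE x in lborel. indicator (ball 0 1) x *\<^sub>R h (x /\<^sub>R norm x) \<le> indicator (ball 0 1) x *\<^sub>R k (x /\<^sub>R norm x)"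
      using AE_lborel_singleton[of 0]
      by eventually_elim (auto simp: indicator_def assms)
  qed
  then show ?thesis by (simp add: sphere_int_alt)
qed

lemma sphere_int_add:
  fixes h k :: "'a::euclidean_space \<Rightarrow> real"
  assumes "continuous_on (sphere 0 1) h" "continuous_on (sphere 0 1) k"
  shows "sphere_int (\<lambda>x. h x + k x) = sphere_int h + sphere_int k"
proof -
  have "integral\<^sup>L lborel (\<lambda>x. indicator (ball 0 1) x *\<^sub>R (h (x /\<^sub>R norm x) + k (x /\<^sub>R norm x))) =
        integral\<^sup>L lborel (\<lambda>x. indicator (ball 0 1) x *\<^sub>R h (x /\<^sub>R norm x) + indicator (ball 0 1) x *\<^sub>R k (x /\<^sub>R norm x))"
    by (simp add: algebra_simps)
  also have "\<dots> = integral\<^sup>L lborel (\<lambda>x. indicator (ball 0 1) x *\<^sub>R h (x /\<^sub>R norm x)) + 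
        integral\<^sup>L lborel (\<lambda>x. indicator (ball 0 1) x *\<^sub>R k (x /\<^sub>R norm x))"
    by (rule Bochner_Integration.integral_add[OF cone_int[OF assms(1)] cone_int[OF assms(2)]])
  finally show ?thesis by (simp add: sphere_int_alt algebra_simps)
qed

lemma sphere_int_cmult:
  fixes h :: "'a::euclidean_space \<Rightarrow> real"
  shows "sphere_int (\<lambda>x. c * h x) = c * sphere_int h"
proof -
  have "integral\<^sup>L lborel (\<lambda>x. indicator (ball 0 1) x *\<^sub>R (c * h (x /\<^sub>R norm x))) =
        integral\<^sup>L lborel (\<lambda>x. c * (indicator (ball 0 1) x *\<^sub>R h (x /\<^sub>R norm x)))"
    by (simp add: algebra_simps)
  also have "\<dots> = c * integral\<^sup>L lborel (\<lambda>x. indicator (ball 0 1) x *\<^sub>R h (x /\<^sub>R norm x))"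
    by simp
  finally show ?thesis by (simp add: sphere_int_alt algebra_simps)
qed

lemma sphere_int_const:
  "sphere_int (\<lambda>_::'a::euclidean_space. c) = c * omega TYPE('a)"
  unfolding omega_def using sphere_int_cmult[of c "\<lambda>_::'a. 1"] by simp

lemma omega_pos: "omega TYPE('a::euclidean_space) > 0"
proof -
  have "omega TYPE('a) = real DIM('a) * measure lborel (ball (0::'a) 1)"
    unfolding omega_def sphere_int_def
    using emeasure_bounded_finite[OF bounded_ball, of "0::'a" 1]
    by (subst set_integral_const) auto
  moreover have "measure lborel (ball (0::'a) 1) > 0" by simp
  ultimately show ?thesis by simp
qed

lemma sphere_int_ge:
  fixes h :: "'a::euclidean_space \<Rightarrow> real"
  assumes "\<And>x. x \<in> sphere 0 1 \<Longrightarrow> b \<le> h x" "continuous_on (sphere 0 1) h"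
  shows "b * omega TYPE('a) \<le> sphere_int h"
  using sphere_int_mono[of "\<lambda>_. b" h] assms by (simp add: sphere_int_const)

lemma sphere_int_le:
  fixes h :: "'a::euclidean_space \<Rightarrow> real"
  assumes "\<And>x. x \<in> sphere 0 1 \<Longrightarrow> h x \<le> b" "continuous_on (sphere 0 1) h"
  shows "sphere_int h \<le> b * omega TYPE('a)"
  using sphere_int_mono[of h "\<lambda>_. b"] assms by (simp add: sphere_int_const)

lemma sphere_int_abs_le:
  fixes h :: "'a::euclidean_space \<Rightarrow> real"
  assumes "\<And>x. x \<in> sphere 0 1 \<Longrightarrow> \<bar>h x\<bar> \<le> b" "continuous_on (sphere 0 1) h"
  shows "\<bar>sphere_int h\<bar> \<le> b * omega TYPE('a)"
  using sphere_int_le[of h b] sphere_int_ge[of "-b" h] assms by (force simp: abs_le_iff)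

lemma sphere_int_LIMSEQ:
  fixes h :: "nat \<Rightarrow> 'a::euclidean_space \<Rightarrow> real"
  assumes "\<And>i. continuous_on (sphere 0 1) (h i)" "continuous_on (sphere 0 1) h0"
    and "\<And>i x. x \<in> sphere 0 1 \<Longrightarrow> \<bar>h i x\<bar> \<le> B"
    and "\<And>x. x \<in> sphere 0 1 \<Longrightarrow> (\<lambda>i. h i x) \<longlonglongrightarrow> h0 x"
  shows "(\<lambda>i. sphere_int (h i)) \<longlonglongrightarrow> sphere_int h0"
proof -
  have i: "integrable lborel (\<lambda>x::'a. indicator (ball 0 1) x * B)"
    using emeasure_bounded_finite[OF bounded_ball, of "0::'a" 1]
    by (intro integrable_mult_left integrable_real_indicator) auto
  have "(\<lambda>i. integral\<^sup>L lborel (\<lambda>x. indicator (ball 0 1) x *\<^sub>R h i (x /\<^sub>R norm x))) \<longlonglongrightarrow>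
        integral\<^sup>L lborel (\<lambda>x. indicator (ball 0 1) x *\<^sub>R h0 (x /\<^sub>R norm x))"
  proof (rule integral_dominated_convergence[OF cone_meas[OF assms(2)] cone_meas[OF assms(1)] i])
    show "AE x in lborel. (\<lambda>i. indicator (ball 0 1) x *\<^sub>R h i (x /\<^sub>R norm x)) \<longlonglongrightarrow> indicator (ball 0 1) x *\<^sub>R h0 (x /\<^sub>R norm x)"
      using AE_lborel_singleton[of 0]
    proof eventually_elim
      fix x :: 'a assume "x \<noteq> 0"
      then have "x /\<^sub>R norm x \<in> sphere 0 1" by auto
      then show "(\<lambda>i. indicator (ball 0 1) x *\<^sub>R h i (x /\<^sub>R norm x)) \<longlonglongrightarrow> indicator (ball 0 1) x *\<^sub>R h0 (x /\<^sub>R norm x)"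
        by (intro tendsto_intros assms(4))
    qed
    fix i
    show "AE x in lborel. norm (indicator (ball 0 1) x *\<^sub>R h i (x /\<^sub>R norm x)) \<le> indicator (ball 0 1) x * B"
      using AE_lborel_singleton[of 0]
    proof eventually_elim
      fix x :: 'a assume "x \<noteq> 0"
      then have "x /\<^sub>R norm x \<in> sphere 0 1" by auto
      then show "norm (indicator (ball 0 1) x *\<^sub>R h i (x /\<^sub>R norm x)) \<le> indicator (ball 0 1) x * B"
        using assms(3) by (auto simp: indicator_def)
    qed
  qed
  then show ?thesis unfolding sphere_int_alt by (intro tendsto_intros)
qed

lemma sphere_int_tendsto:
  fixes h :: "real \<Rightarrow> 'a::euclidean_space \<Rightarrow> real"
  assumes ev: "eventually (\<lambda>y. continuous_on (sphere 0 1) (h y) \<and> (\<forall>x\<in>sphere 0 1. \<bar>h y x\<bar> \<le> B)) (at s within I)"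
    and c0: "continuous_on (sphere 0 1) h0"
    and lim: "\<And>x. x \<in> sphere 0 1 \<Longrightarrow> ((\<lambda>y. h y x) \<longlongrightarrow> h0 x) (at s within I)"
  shows "((\<lambda>y. sphere_int (h y)) \<longlongrightarrow> sphere_int h0) (at s within I)"
  unfolding tendsto_at_iff_sequentially
proof (intro allI impI)
  fix X :: "nat \<Rightarrow> real"
  assume X: "\<forall>i. X i \<in> I - {s}" "X \<longlonglongrightarrow> s"
  then have fl: "filterlim X (at s within I) sequentially"
    by (auto simp: filterlim_at)
  from filterlim_iff[THEN iffD1, OF fl, rule_format, OF ev]
  obtain N where N: "\<And>i. i \<ge> N \<Longrightarrow> continuous_on (sphere 0 1) (h (X i)) \<and> (\<forall>x\<in>sphere 0 1. \<bar>h (X i) x\<bar> \<le> B)"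
    by (auto simp: eventually_sequentially)
  have "(\<lambda>i. sphere_int (h (X (i + N)))) \<longlonglongrightarrow> sphere_int h0"
  proof (rule sphere_int_LIMSEQ[where B=B])
    show "\<And>i. continuous_on (sphere 0 1) (h (X (i + N)))" using N by auto
    show "\<And>i x. x \<in> sphere 0 1 \<Longrightarrow> \<bar>h (X (i + N)) x\<bar> \<le> B" using N by auto
    fix x :: 'a assume "x \<in> sphere 0 1"
    from filterlim_compose[OF lim[OF this] fl]
    have "(\<lambda>i. h (X i) x) \<longlonglongrightarrow> h0 x" .
    then show "(\<lambda>i. h (X (i + N)) x) \<longlonglongrightarrow> h0 x"
      by (rule LIMSEQ_ignore_initial_segment)
  qed (rule c0)
  then show "((\<lambda>y. sphere_int (h y)) \<circ> X) \<longlonglongrightarrow> sphere_int h0"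
    unfolding comp_def by (rule LIMSEQ_offset)
qed

lemma ball_int_nonneg:
  fixes h :: "'a::euclidean_space \<Rightarrow> real"
  assumes "\<And>x. x \<in> ball 0 1 \<Longrightarrow> 0 \<le> h x"
  shows "0 \<le> ball_int h"
  unfolding ball_int_def set_lebesgue_integral_def
  by (rule integral_nonneg_AE) (auto simp: indicator_def assms)

lemma ball_int_le:
  fixes h :: "'a::euclidean_space \<Rightarrow> real"
  assumes "\<And>x. x \<in> ball 0 1 \<Longrightarrow> h x \<le> B" "0 \<le> B"
  shows "ball_int h \<le> B * measure lborel (ball (0::'a) 1)"
proof (cases "set_integrable lborel (ball 0 1) h")
  case True
  have fin: "emeasure lborel (ball (0::'a) 1) \<noteq> \<infinity>"
    using emeasure_bounded_finite[OF bounded_ball, of "0::'a" 1] by auto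
  have ci: "set_integrable lborel (ball (0::'a) 1) (\<lambda>_. B)"
  proof -
    have "integrable lborel (\<lambda>x::'a. indicator (ball 0 1) x * B)"
      using emeasure_bounded_finite[OF bounded_ball, of "0::'a" 1]
      by (intro integrable_mult_left integrable_real_indicator) auto
    then show ?thesis unfolding set_integrable_def by simp
  qed
  have "ball_int h \<le> (LINT x:ball (0::'a) 1|lborel. B)"
    unfolding ball_int_def by (rule set_integral_mono[OF True ci]) (rule assms(1))
  also have "\<dots> = B * measure lborel (ball (0::'a) 1)"
    using fin by (subst set_integral_const) auto
  finally show ?thesis .
next
  case False
  then have "ball_int h = 0"
    unfolding ball_int_def set_lebesgue_integral_def set_integrable_def
    by (simp add: not_integrable_integral_eq)
  then show ?thesis using assms(2) by simp
qed



lemma smooth_cont: "smooth_on U g \<Longrightarrow> continuous_on U g"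
  unfolding smooth_on_def
  by (metis continuous_at_imp_continuous_on differentiable_imp_continuous_within dirderiv.simps(1))

lemma smooth_dir_cont: "smooth_on U g \<Longrightarrow> continuous_on U (\<lambda>z. frechet_derivative g (at z) v)"
proof (intro continuous_at_imp_continuous_on ballI)
  fix x assume "smooth_on U g" "x \<in> U"
  then have "dirderiv [v] g differentiable (at x)" unfolding smooth_on_def by blast
  then show "isCont (\<lambda>z. frechet_derivative g (at z) v) x"
    using differentiable_imp_continuous_within by fastforce
qed

lemma smooth_partial:
  fixes g :: "real \<times> 'a::euclidean_space \<Rightarrow> real"
  assumes "smooth_on U g" "(t, x) \<in> U"
  shows "((\<lambda>y. g (t, y)) has_derivative (\<lambda>w. frechet_derivative g (at (t, x)) (0, w))) (at x)"
proof -
  have "g differentiable (at (t, x))" using assms unfolding smooth_on_def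
    by (metis dirderiv.simps(1))
  then have d: "(g has_derivative frechet_derivative g (at (t, x))) (at (t, x))"
    using frechet_derivative_works by blast
  have p: "((\<lambda>y. (t, y)) has_derivative (\<lambda>w. (0, w))) (at x)"
    by (auto intro!: derivative_eq_intros)
  show ?thesis
    using diff_chain_at[OF p d] by (simp add: o_def)
qed

lemma smooth_partial_fd:
  fixes g :: "real \<times> 'a::euclidean_space \<Rightarrow> real"
  assumes "smooth_on U g" "(t, x) \<in> U"
  shows "frechet_derivative (\<lambda>y. g (t, y)) (at x) = (\<lambda>w. frechet_derivative g (at (t, x)) (0, w))"
  using frechet_derivative_at[OF smooth_partial[OF assms]] by simp

lemma smooth_normal_deriv:
  fixes g :: "real \<times> 'a::euclidean_space \<Rightarrow> real"
  assumes "smooth_on U g" "(t, x) \<in> U"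
  shows "normal_deriv (\<lambda>y. g (t, y)) x = (\<Sum>b\<in>Basis. (x \<bullet> b) * frechet_derivative g (at (t, x)) (0, b))"
proof -
  have lin: "linear (\<lambda>w. frechet_derivative g (at (t, x)) (0, w))"
    using has_derivative_linear[OF smooth_partial[OF assms]] .
  have "normal_deriv (\<lambda>y. g (t, y)) x = frechet_derivative g (at (t, x)) (0, \<Sum>b\<in>Basis. (x \<bullet> b) *\<^sub>R b)"
    unfolding normal_deriv_def smooth_partial_fd[OF assms] euclidean_representation ..
  also have "\<dots> = (\<Sum>b\<in>Basis. (x \<bullet> b) * frechet_derivative g (at (t, x)) (0, b))"
    using linear_sum[OF lin, of "\<lambda>b. (x \<bullet> b) *\<^sub>R b" Basis] linear_scale[OF lin] by simp
  finally show ?thesis .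
qed

lemma smooth_grad_sq:
  fixes g :: "real \<times> 'a::euclidean_space \<Rightarrow> real"
  assumes "smooth_on U g" "(t, x) \<in> U"
  shows "grad_sq (\<lambda>y. g (t, y)) x = (\<Sum>b\<in>Basis. (frechet_derivative g (at (t, x)) (0, b))^2)"
  unfolding grad_sq_def smooth_partial_fd[OF assms] ..



theorem lemma3p1:
  fixes n :: nat and f :: "'a::euclidean_space \<Rightarrow> real"
    and u :: "real \<Rightarrow> 'a \<Rightarrow> real" and T :: real
  assumes "n \<ge> 2" and "DIM('a) = n + 1"
    and "\<exists>V. sphere 0 1 \<subseteq> V \<and> smooth_on V f"
    and "T > 0"
    and "cmcf_solution n f T u"
    and "f_integral n f (u 0) > 0"
  shows "\<forall>t\<in>{0..<T}. f_integral n f (u t) > 0"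
proof -
  obtain V where V: "sphere 0 1 \<subseteq> V" "smooth_on V f" using assms(3) by blast
  have cf: "continuous_on (sphere 0 1) f"
    using continuous_on_subset[OF smooth_cont[OF V(2)] V(1)] .
  define g where "g = (\<lambda>(t, x). u t x)"
  obtain U where U: "{0..<T} \<times> cball 0 1 \<subseteq> U" "smooth_on U g"
    and pos: "\<And>t x. t \<in> {0..<T} \<Longrightarrow> x \<in> cball 0 1 \<Longrightarrow> u t x > 0"
    and lapl: "\<And>t x. t \<in> {0..<T} \<Longrightarrow> x \<in> ball 0 1 \<Longrightarrow> laplacian (u t) x = 0"
    and flow: "\<And>t x. t \<in> {0..<T} \<Longrightarrow> x \<in> sphere 0 1 \<Longrightarrow>
        ((\<lambda>s. u s x) has_real_derivative
           (- (real n - 1) / 4 * (mean_curv n (u t) x - lambda_coef n f (u t) * f x) * u t x))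
        (at t within {0..<T})"
    using assms(5) unfolding cmcf_solution_def g_def by blast
  have ug: "\<And>t. u t = (\<lambda>y. g (t, y))" by (simp add: g_def)
  have gu: "\<And>t x. g (t, x) = u t x" by (simp add: g_def)
  define W where "W = {0..<T} \<times> cball (0::'a) 1"
  have cg: "continuous_on W g" using continuous_on_subset[OF smooth_cont[OF U(2)] U(1)] by (simp add: W_def)
  have cD: "\<And>b. continuous_on W (\<lambda>z. frechet_derivative g (at z) (0, b))"
    using continuous_on_subset[OF smooth_dir_cont[OF U(2)] U(1)] by (simp add: W_def)
  have gpos: "\<And>z. z \<in> W \<Longrightarrow> g z > 0" using pos by (auto simp: W_def g_def)
  define c where "c = crit_exp n"
  define a where "a = a_const n"
  define ee where "ee = - (real n + 1) / (real n - 1)"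
  define Hj where "Hj z = g z powr ee * (a * (\<Sum>b\<in>Basis. (snd z \<bullet> b) * frechet_derivative g (at z) (0, b)) + g z)" for z
  have Hj_eq: "\<And>t x. t \<in> {0..<T} \<Longrightarrow> x \<in> cball 0 1 \<Longrightarrow> mean_curv n (u t) x = Hj (t, x)"
  proof -
    fix t x assume tx: "t \<in> {0..<T}" "(x::'a) \<in> cball 0 1"
    then have "(t, x) \<in> U" using U(1) by auto
    show "mean_curv n (u t) x = Hj (t, x)"
      unfolding mean_curv_def Hj_def ug smooth_normal_deriv[OF U(2) \<open>(t, x) \<in> U\<close>]
      by (simp add: a_def ee_def)
  qed
  have cHj: "continuous_on W Hj"
    unfolding Hj_def using gpos
    by (intro continuous_intros cg cD) (metis less_irrefl)
  have cGs: "continuous_on W (\<lambda>z. \<Sum>b\<in>Basis. (frechet_derivative g (at z) (0, b))^2)"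
    by (intro continuous_intros cD)
  have cu: "\<And>t. t \<in> {0..<T} \<Longrightarrow> continuous_on (cball 0 1) (u t)"
  proof -
    fix t assume t: "t \<in> {0..<T}"
    show "continuous_on (cball 0 1) (u t)"
      unfolding ug by (rule continuous_on_compose2[OF cg]) (use t in \<open>auto intro!: continuous_intros simp: W_def\<close>)
  qed
  have cus: "\<And>t. t \<in> {0..<T} \<Longrightarrow> continuous_on (sphere 0 1) (u t)"
    using cu continuous_on_subset sphere_cball by blast
  have cH: "\<And>t. t \<in> {0..<T} \<Longrightarrow> continuous_on (sphere 0 1) (mean_curv n (u t))"
  proof -
    fix t assume t: "t \<in> {0..<T}"
    have "continuous_on (sphere 0 1) (\<lambda>x. Hj (t, x))"
      by (rule continuous_on_compose2[OF cHj]) (use t in \<open>auto intro!: continuous_intros simp: W_def\<close>)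
    then show "continuous_on (sphere 0 1) (mean_curv n (u t))"
      by (rule continuous_on_cong[THEN iffD1, rotated 2]) (use t in \<open>auto simp: Hj_eq\<close>)
  qed
  have bnds: "\<And>t'. t' \<in> {0..<T} \<Longrightarrow> \<exists>m M Hb Gb. 0 < m \<and>
      (\<forall>t\<in>{0..t'}. \<forall>x\<in>sphere 0 1. m \<le> u t x \<and> u t x \<le> M \<and> \<bar>mean_curv n (u t) x\<bar> \<le> Hb) \<and>
      (\<forall>t\<in>{0..t'}. \<forall>x\<in>cball 0 1. grad_sq (u t) x \<le> Gb)"
  proof -
    fix t' assume t': "t' \<in> {0..<T}"
    define K where "K = {0..t'} \<times> sphere (0::'a) 1"
    define C where "C = {0..t'} \<times> cball (0::'a) 1"
    have KW: "K \<subseteq> W" and CW: "C \<subseteq> W" using t' by (auto simp: K_def C_def W_def)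
    have cK: "compact K" "compact C" unfolding K_def C_def by (intro compact_Times compact_Icc compact_sphere compact_cball)+
    obtain b :: 'a where "b \<in> Basis" using nonempty_Basis by blast
    then have "(0, b) \<in> K" using t' by (auto simp: K_def)
    then have Kne: "K \<noteq> {}" by auto
    obtain z0 where z0: "z0 \<in> K" "\<forall>z\<in>K. g z0 \<le> g z"
      using continuous_attains_inf[OF cK(1) Kne continuous_on_subset[OF cg KW]] by blast
    obtain M where M: "\<forall>z\<in>K. norm (g z) \<le> M"
      using compact_imp_bounded[OF compact_continuous_image[OF continuous_on_subset[OF cg KW] cK(1)]]
      unfolding bounded_iff by auto
    obtain Hb where Hb: "\<forall>z\<in>K. norm (Hj z) \<le> Hb"
      using compact_imp_bounded[OF compact_continuous_image[OF continuous_on_subset[OF cHj KW] cK(1)]]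
      unfolding bounded_iff by auto
    obtain Gb where Gb: "\<forall>z\<in>C. norm (\<Sum>b\<in>Basis. (frechet_derivative g (at z) (0, b))^2) \<le> Gb"
      using compact_imp_bounded[OF compact_continuous_image[OF continuous_on_subset[OF cGs CW] cK(2)]]
      unfolding bounded_iff by auto
    show "\<exists>m M Hb Gb. 0 < m \<and>
      (\<forall>t\<in>{0..t'}. \<forall>x\<in>sphere 0 1. m \<le> u t x \<and> u t x \<le> M \<and> \<bar>mean_curv n (u t) x\<bar> \<le> Hb) \<and>
      (\<forall>t\<in>{0..t'}. \<forall>x\<in>cball 0 1. grad_sq (u t) x \<le> Gb)"
    proof (intro exI conjI ballI)
      show "0 < g z0" using gpos[of z0] z0(1) KW by blast
      fix t x assume tx: "t \<in> {0..t'}" "x \<in> sphere (0::'a) 1"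
      then have tT: "t \<in> {0..<T}" using t' by auto
      have "(t, x) \<in> K" using tx by (auto simp: K_def)
      then show "g z0 \<le> u t x" "u t x \<le> M" "\<bar>mean_curv n (u t) x\<bar> \<le> Hb"
        using z0(2) M Hb Hj_eq[OF tT, of x] tx(2) by (auto simp: gu)
    next
      fix t x assume tx: "t \<in> {0..t'}" "x \<in> cball (0::'a) 1"
      then have "(t, x) \<in> C" by (auto simp: C_def)
      moreover have "(t, x) \<in> U" using \<open>(t, x) \<in> C\<close> CW U(1) W_def by auto
      ultimately show "grad_sq (u t) x \<le> Gb"
        using Gb unfolding ug smooth_grad_sq[OF U(2) \<open>(t, x) \<in> U\<close>] by fastforce
    qed
  qed
  obtain fb where fb: "\<forall>x\<in>sphere 0 1. norm (f x) \<le> fb"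
    using compact_imp_bounded[OF compact_continuous_image[OF cf compact_sphere]]
    unfolding bounded_iff by auto
  have n1: "real n - 1 > 0" using assms(1) by simp
  have a_pos: "a > 0" using n1 by (simp add: a_def a_const_def)
  have c_pos: "c > 2" using n1 by (simp add: c_def crit_exp_def field_simps)
  have omp: "omega TYPE('a) > 0" by (rule omega_pos)
  define Fi where "Fi t = f_integral n f (u t)" for t
  have Fi': "\<And>t. Fi t = sphere_int (\<lambda>x. f x * u t x powr c)" by (simp add: Fi_def f_integral_def c_def)
  have cint: "\<And>t. t \<in> {0..<T} \<Longrightarrow> continuous_on (sphere 0 1) (\<lambda>x. f x * u t x powr c)"
  proof -
    fix t assume t: "t \<in> {0..<T}"
    show "continuous_on (sphere 0 1) (\<lambda>x. f x * u t x powr c)"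
      using cf cus[OF t] pos[OF t] by (intro continuous_intros) (auto simp: less_imp_neq[symmetric])
  qed
  have cut: "\<And>x. x \<in> cball 0 1 \<Longrightarrow> continuous_on {0..<T} (\<lambda>y. u y x)"
  proof -
    fix x :: 'a assume x: "x \<in> cball 0 1"
    show "continuous_on {0..<T} (\<lambda>y. u y x)"
      unfolding gu[symmetric] by (rule continuous_on_compose2[OF cg]) (use x in \<open>auto intro!: continuous_intros simp: W_def\<close>)
  qed
  have Elow: "\<And>t m. t \<in> {0..<T} \<Longrightarrow> 0 \<le> m \<Longrightarrow> (\<forall>x\<in>sphere 0 1. m \<le> u t x) \<Longrightarrow> m^2 \<le> energy n (u t)"
  proof -
    fix t m assume t: "t \<in> {0..<T}" and m: "0 \<le> m" "\<forall>x\<in>sphere 0 1. m \<le> u t x"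
    have b0: "0 \<le> ball_int (\<lambda>x. a_const n * grad_sq (u t) x)"
      using a_pos by (intro ball_int_nonneg mult_nonneg_nonneg) (auto simp: a_def grad_sq_def intro!: sum_nonneg)
    have "m^2 * omega TYPE('a) \<le> sphere_int (\<lambda>x. (u t x)^2)"
      using m cus[OF t] by (intro sphere_int_ge power_mono continuous_intros) auto
    then have "m^2 \<le> (1 / omega TYPE('a)) * sphere_int (\<lambda>x. (u t x)^2)"
      using omp by (simp add: field_simps)
    moreover have "0 \<le> (1 / omega TYPE('a)) * ball_int (\<lambda>x. a_const n * grad_sq (u t) x)"
      using b0 omp by simp
    ultimately show "m^2 \<le> energy n (u t)" unfolding energy_def by linarith
  qed
  have Eup: "\<And>t M Gb. t \<in> {0..<T} \<Longrightarrow> (\<forall>x\<in>sphere 0 1. u t x \<le> M) \<Longrightarrow> (\<forall>x\<in>cball 0 1. grad_sq (u t) x \<le> Gb)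
      \<Longrightarrow> energy n (u t) \<le> (1 / omega TYPE('a)) * (a * Gb * measure lborel (ball (0::'a) 1)) + M^2"
  proof -
    fix t M Gb assume t: "t \<in> {0..<T}" and M: "\<forall>x\<in>sphere 0 1. u t x \<le> M" and G: "\<forall>x\<in>cball 0 1. grad_sq (u t) x \<le> Gb"
    have "0 \<le> grad_sq (u t) 0" by (auto simp: grad_sq_def intro!: sum_nonneg)
    moreover have "grad_sq (u t) 0 \<le> Gb" using G by simp
    ultimately have Gb0: "0 \<le> Gb" by linarith
    have b0: "ball_int (\<lambda>x. a_const n * grad_sq (u t) x) \<le> a * Gb * measure lborel (ball (0::'a) 1)"
      using a_pos G Gb0 by (intro ball_int_le) (auto simp: a_def intro!: mult_left_mono)
    have "sphere_int (\<lambda>x. (u t x)^2) \<le> M^2 * omega TYPE('a)"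
      using M cus[OF t] pos[OF t] by (intro sphere_int_le power_mono continuous_intros) (auto simp: less_imp_le)
    then have "(1 / omega TYPE('a)) * sphere_int (\<lambda>x. (u t x)^2) \<le> M^2"
      using omp by (simp add: field_simps)
    moreover have "(1 / omega TYPE('a)) * ball_int (\<lambda>x. a_const n * grad_sq (u t) x) \<le> (1 / omega TYPE('a)) * (a * Gb * measure lborel (ball (0::'a) 1))"
      using b0 omp by (intro mult_left_mono) auto
    ultimately show "energy n (u t) \<le> (1 / omega TYPE('a)) * (a * Gb * measure lborel (ball (0::'a) 1)) + M^2"
      unfolding energy_def by linarith
  qed
  have fb0: "0 \<le> fb"
  proof -
    obtain b :: 'a where "b \<in> Basis" using nonempty_Basis by blast
    then have "b \<in> sphere 0 1" by auto
    then show ?thesis using fb norm_ge_zero order.trans by blast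
  qed
  have cFi: "\<And>s. s \<in> {0..<T} \<Longrightarrow> continuous (at s within {0..<T}) Fi"
  proof -
    fix s assume s: "s \<in> {0..<T}"
    define t' where "t' = (s + T) / 2"
    have t': "t' \<in> {0..<T}" "s < t'" using s by (auto simp: t'_def)
    obtain m M Hb Gb where mM: "0 < m" "\<forall>t\<in>{0..t'}. \<forall>x\<in>sphere 0 1. m \<le> u t x \<and> u t x \<le> M \<and> \<bar>mean_curv n (u t) x\<bar> \<le> Hb"
      using bnds[OF t'(1)] by blast
    have ev: "eventually (\<lambda>y. continuous_on (sphere 0 1) (\<lambda>x. f x * u y x powr c) \<and>
        (\<forall>x\<in>sphere 0 1. \<bar>f x * u y x powr c\<bar> \<le> fb * M powr c)) (at s within {0..<T})"
      unfolding eventually_at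
    proof (intro exI[of _ "t' - s"] conjI ballI impI)
      show "0 < t' - s" using t' by simp
      fix y assume y: "y \<in> {0..<T}" "y \<noteq> s \<and> dist y s < t' - s"
      then have yt: "y \<in> {0..t'}" by (auto simp: dist_real_def)
      show "continuous_on (sphere 0 1) (\<lambda>x. f x * u y x powr c)" using cint y(1) .
      fix x :: 'a assume x: "x \<in> sphere 0 1"
      have "\<bar>f x * u y x powr c\<bar> = \<bar>f x\<bar> * u y x powr c" by (simp add: abs_mult)
      also have "\<dots> \<le> fb * M powr c"
      proof (rule mult_mono)
        show "\<bar>f x\<bar> \<le> fb" using fb x by auto
        have "0 < u y x" using pos[OF y(1), of x] x by auto
        moreover have "u y x \<le> M" using mM(2) yt x by auto
        ultimately show "u y x powr c \<le> M powr c" using c_pos by (intro powr_mono2) auto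
      qed (auto simp: fb0)
      finally show "\<bar>f x * u y x powr c\<bar> \<le> fb * M powr c" .
    qed
    have lim: "((\<lambda>y. f x * u y x powr c) \<longlongrightarrow> f x * u s x powr c) (at s within {0..<T})"
      if x: "x \<in> sphere 0 1" for x
    proof -
      have "((\<lambda>y. u y x) \<longlongrightarrow> u s x) (at s within {0..<T})"
        using cut[of x] x s unfolding continuous_on_def by auto
      then show ?thesis using pos[OF s, of x] x by (intro tendsto_intros) auto
    qed
    show "continuous (at s within {0..<T}) Fi"
      unfolding continuous_within Fi' by (rule sphere_int_tendsto[OF ev cint[OF s] lim])
  qed
  have cFiT: "continuous_on {0..<T} Fi"
    using cFi continuous_on_eq_continuous_within by blast
  define lam where "lam t = lambda_coef n f (u t)" for t
  define ut where "ut t x = - (real n - 1) / 4 * (mean_curv n (u t) x - lam t * f x) * u t x" for t x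
  define Dv where "Dv s = sphere_int (\<lambda>x. f x * (c * u s x powr (c - 1) * ut s x))" for s
  have lam_eq: "\<And>t. lam t = energy n (u t) * omega TYPE('a) / Fi t"
    unfolding lam_def lambda_coef_def Fi_def by simp
  have pder: "\<And>x \<sigma>. x \<in> sphere 0 1 \<Longrightarrow> \<sigma> \<in> {0<..<T} \<Longrightarrow>
      ((\<lambda>y. f x * u y x powr c) has_real_derivative f x * (c * u \<sigma> x powr (c - 1) * ut \<sigma> x)) (at \<sigma>)"
  proof -
    fix x :: 'a and \<sigma> assume x: "x \<in> sphere 0 1" and \<sigma>: "\<sigma> \<in> {0<..<T}"
    have "\<sigma> \<in> interior {0..<T}" using \<sigma> by simp
    then have "at \<sigma> within {0..<T} = at \<sigma>" by (rule at_within_interior)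
    then have d: "((\<lambda>y. u y x) has_real_derivative ut \<sigma> x) (at \<sigma>)"
      using flow[of \<sigma> x] x \<sigma> by (simp add: ut_def lam_def)
    have "u \<sigma> x > 0" using pos[of \<sigma> x] x \<sigma> by auto
    from DERIV_cmult[OF DERIV_fun_powr[OF d this, of c], of "f x"]
    show "((\<lambda>y. f x * u y x powr c) has_real_derivative f x * (c * u \<sigma> x powr (c - 1) * ut \<sigma> x)) (at \<sigma>)"
      by (simp add: mult.assoc)
  qed
  have cut_s: "\<And>t. t \<in> {0..<T} \<Longrightarrow> continuous_on (sphere 0 1) (ut t)"
  proof -
    fix t assume t: "t \<in> {0..<T}"
    show "continuous_on (sphere 0 1) (ut t)"
      unfolding ut_def using cH[OF t] cus[OF t] cf by (intro continuous_intros)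
  qed
  have cdint: "\<And>t. t \<in> {0..<T} \<Longrightarrow> continuous_on (sphere 0 1) (\<lambda>x. f x * (c * u t x powr (c - 1) * ut t x))"
  proof -
    fix t assume t: "t \<in> {0..<T}"
    show "continuous_on (sphere 0 1) (\<lambda>x. f x * (c * u t x powr (c - 1) * ut t x))"
      using cf cus[OF t] pos[OF t] cut_s[OF t] by (intro continuous_intros) (auto simp: less_imp_neq[symmetric])
  qed
  have quot: "\<And>y s. y \<in> {0..<T} \<Longrightarrow> s \<in> {0..<T} \<Longrightarrow>
     (Fi y - Fi s) / (y - s) = sphere_int (\<lambda>x. (f x * u y x powr c - f x * u s x powr c) / (y - s))"
  proof -
    fix y s assume y: "y \<in> {0..<T}" and s: "s \<in> {0..<T}"
    have neg: "\<And>h::'a\<Rightarrow>real. sphere_int (\<lambda>x. - h x) = - sphere_int h"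
      using sphere_int_cmult[of "-1"] by simp
    have "sphere_int (\<lambda>x. (f x * u y x powr c - f x * u s x powr c) / (y - s)) =
          sphere_int (\<lambda>x. (1 / (y - s)) * (f x * u y x powr c + (-1) * (f x * u s x powr c)))"
      by (simp add: field_simps)
    also have "\<dots> = (1 / (y - s)) * (Fi y + (-1) * Fi s)"
      using neg unfolding sphere_int_cmult Fi'
      by (subst sphere_int_add) (auto intro!: continuous_intros cint y s simp: sphere_int_cmult)
    finally show "(Fi y - Fi s) / (y - s) = sphere_int (\<lambda>x. (f x * u y x powr c - f x * u s x powr c) / (y - s))"
      by (simp add: field_simps)
  qed
  have deriv: "\<And>t1 s. t1 \<in> {0..<T} \<Longrightarrow> (\<forall>t\<in>{0..<t1}. Fi t > 0) \<Longrightarrow> s \<in> {0<..<t1} \<Longrightarrow>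
      (Fi has_real_derivative Dv s) (at s)"
  proof -
    fix t1 s assume t1: "t1 \<in> {0..<T}" and Fpos: "\<forall>t\<in>{0..<t1}. Fi t > 0" and s: "s \<in> {0<..<t1}"
    obtain m M Hb Gb where mM: "0 < m" "\<forall>t\<in>{0..t1}. \<forall>x\<in>sphere 0 1. m \<le> u t x \<and> u t x \<le> M \<and> \<bar>mean_curv n (u t) x\<bar> \<le> Hb"
      and Gb: "\<forall>t\<in>{0..t1}. \<forall>x\<in>cball 0 1. grad_sq (u t) x \<le> Gb"
      using bnds[OF t1] by blast
    define \<rho> where "\<rho> = min s (t1 - s) / 2"
    have \<rho>: "0 < \<rho>" using s by (auto simp: \<rho>_def)
    define J where "J = {s - \<rho>..s + \<rho>}"
    have J0: "J \<subseteq> {0<..<t1}"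
    proof
      fix x assume "x \<in> J"
      then have "s - \<rho> \<le> x" "x \<le> s + \<rho>" by (auto simp: J_def)
      moreover have "\<rho> \<le> s / 2" "\<rho> \<le> (t1 - s) / 2" by (auto simp: \<rho>_def)
      ultimately show "x \<in> {0<..<t1}" using s by auto
    qed
    have JT: "J \<subseteq> {0<..<T}" using J0 t1 by auto
    have cFJ: "continuous_on J Fi"
      using JT by (intro continuous_on_subset[OF cFiT]) auto
    obtain \<sigma>0 where \<sigma>0: "\<sigma>0 \<in> J" "\<forall>\<sigma>\<in>J. Fi \<sigma>0 \<le> Fi \<sigma>"
      using continuous_attains_inf[OF compact_Icc _ cFJ[unfolded J_def]] \<rho> unfolding J_def by auto
    define Fm where "Fm = Fi \<sigma>0"
    have Fm: "0 < Fm" using Fpos \<sigma>0(1) J0 by (auto simp: Fm_def)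
    define Eb where "Eb = (1 / omega TYPE('a)) * (a * Gb * measure lborel (ball (0::'a) 1)) + M^2"
    define Lb where "Lb = Eb * omega TYPE('a) / Fm"
    have lamb: "\<And>\<sigma>. \<sigma> \<in> J \<Longrightarrow> 0 \<le> lam \<sigma> \<and> lam \<sigma> \<le> Lb"
    proof -
      fix \<sigma> assume \<sigma>: "\<sigma> \<in> J"
      then have \<sigma>T: "\<sigma> \<in> {0..<T}" "\<sigma> \<in> {0..t1}" using JT J0 by auto
      have E0: "0 \<le> energy n (u \<sigma>)"
        using Elow[OF \<sigma>T(1), of m] mM \<sigma>T(2) by (meson less_imp_le order.trans zero_le_power2)
      have E1: "energy n (u \<sigma>) \<le> Eb" unfolding Eb_def
        using Eup[OF \<sigma>T(1), of M Gb] mM(2) Gb \<sigma>T(2) by blast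
      have F1: "Fm \<le> Fi \<sigma>" using \<sigma>0(2) \<sigma> by (auto simp: Fm_def)
      have "0 \<le> lam \<sigma>" unfolding lam_eq using E0 omp F1 Fm by auto
      moreover have "lam \<sigma> \<le> Lb" unfolding lam_eq Lb_def
        using E0 E1 omp F1 Fm by (intro frac_le mult_right_mono) auto
      ultimately show "0 \<le> lam \<sigma> \<and> lam \<sigma> \<le> Lb" by simp
    qed
    define Bd where "Bd = fb * (c * M powr (c - 1) * ((real n - 1) / 4 * (Hb + Lb * fb) * M))"
    have dbound: "\<And>\<sigma> x. \<sigma> \<in> J \<Longrightarrow> x \<in> sphere 0 1 \<Longrightarrow> \<bar>f x * (c * u \<sigma> x powr (c - 1) * ut \<sigma> x)\<bar> \<le> Bd"
    proof -
      fix \<sigma> x assume \<sigma>: "\<sigma> \<in> J" and x: "(x::'a) \<in> sphere 0 1"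
      then have \<sigma>T: "\<sigma> \<in> {0..<T}" "\<sigma> \<in> {0..t1}" using JT J0 by auto
      have ub: "m \<le> u \<sigma> x" "u \<sigma> x \<le> M" "\<bar>mean_curv n (u \<sigma>) x\<bar> \<le> Hb" using mM(2) \<sigma>T(2) x by auto
      have up: "0 < u \<sigma> x" using ub mM(1) by linarith
      have fx: "\<bar>f x\<bar> \<le> fb" using fb x by auto
      have l: "0 \<le> lam \<sigma>" "lam \<sigma> \<le> Lb" using lamb[OF \<sigma>] by auto
      have "\<bar>lam \<sigma> * f x\<bar> \<le> Lb * fb"
        unfolding abs_mult using l fx by (intro mult_mono) auto
      then have h1: "\<bar>mean_curv n (u \<sigma>) x - lam \<sigma> * f x\<bar> \<le> Hb + Lb * fb" using ub(3) by linarith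
      have "\<bar>ut \<sigma> x\<bar> = (real n - 1) / 4 * \<bar>mean_curv n (u \<sigma>) x - lam \<sigma> * f x\<bar> * u \<sigma> x"
        unfolding ut_def using n1 up by (simp add: abs_mult)
      also have "\<dots> \<le> (real n - 1) / 4 * (Hb + Lb * fb) * M"
        using n1 up h1 ub(2) by (intro mult_mono) auto
      finally have h2: "\<bar>ut \<sigma> x\<bar> \<le> (real n - 1) / 4 * (Hb + Lb * fb) * M" .
      have h3: "u \<sigma> x powr (c - 1) \<le> M powr (c - 1)" using up ub c_pos by (intro powr_mono2) auto
      have "\<bar>f x * (c * u \<sigma> x powr (c - 1) * ut \<sigma> x)\<bar> = \<bar>f x\<bar> * (c * u \<sigma> x powr (c - 1) * \<bar>ut \<sigma> x\<bar>)"
        using c_pos by (simp add: abs_mult)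
      also have "\<dots> \<le> fb * (c * M powr (c - 1) * ((real n - 1) / 4 * (Hb + Lb * fb) * M))"
        using fx h2 h3 c_pos fb0 by (intro mult_mono) auto
      finally show "\<bar>f x * (c * u \<sigma> x powr (c - 1) * ut \<sigma> x)\<bar> \<le> Bd" unfolding Bd_def .
    qed
    have qbound: "\<And>y x. y \<in> J \<Longrightarrow> y \<noteq> s \<Longrightarrow> x \<in> sphere 0 1 \<Longrightarrow>
        \<bar>(f x * u y x powr c - f x * u s x powr c) / (y - s)\<bar> \<le> Bd"
    proof -
      fix y x assume y: "y \<in> J" "y \<noteq> s" and x: "(x::'a) \<in> sphere 0 1"
      have sJ: "s \<in> J" using \<rho> by (auto simp: J_def)
      define p where "p = min y s"
      define q where "q = max y s"
      have pq: "p < q" using y(2) by (auto simp: p_def q_def)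
      have pqJ: "\<And>z. p \<le> z \<Longrightarrow> z \<le> q \<Longrightarrow> z \<in> J"
        using y(1) sJ by (auto simp: p_def q_def J_def)
      obtain z where z: "p < z" "z < q"
        "f x * u q x powr c - f x * u p x powr c = (q - p) * (f x * (c * u z x powr (c - 1) * ut z x))"
        using MVT2[OF pq, of "\<lambda>y. f x * u y x powr c" "\<lambda>z. f x * (c * u z x powr (c - 1) * ut z x)"]
          pder[OF x] pqJ JT by blast
      have zb: "\<bar>f x * (c * u z x powr (c - 1) * ut z x)\<bar> \<le> Bd" using dbound[OF pqJ x] z by auto
      have "\<bar>(f x * u y x powr c - f x * u s x powr c) / (y - s)\<bar> =
            \<bar>(f x * u q x powr c - f x * u p x powr c) / (q - p)\<bar>"
        by (cases "y < s") (auto simp: p_def q_def abs_div abs_minus_commute)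
      also have "\<dots> = \<bar>f x * (c * u z x powr (c - 1) * ut z x)\<bar>" using z(3) pq by simp
      finally show "\<bar>(f x * u y x powr c - f x * u s x powr c) / (y - s)\<bar> \<le> Bd" using zb by simp
    qed
    have sT: "s \<in> {0..<T}" using s t1 by auto
    have ev: "eventually (\<lambda>y. continuous_on (sphere 0 1) (\<lambda>x. (f x * u y x powr c - f x * u s x powr c) / (y - s)) \<and>
        (\<forall>x\<in>sphere 0 1. \<bar>(f x * u y x powr c - f x * u s x powr c) / (y - s)\<bar> \<le> Bd)) (at s)"
      unfolding eventually_at
    proof (intro exI[of _ \<rho>] conjI ballI impI)
      fix y assume y: "y \<noteq> s \<and> dist y s < \<rho>"
      then have yJ: "y \<in> J" by (auto simp: J_def dist_real_def)
      then have yT: "y \<in> {0..<T}" using JT by auto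
      show "continuous_on (sphere 0 1) (\<lambda>x. (f x * u y x powr c - f x * u s x powr c) / (y - s))"
        using y by (intro continuous_on_divide continuous_on_diff cint[OF yT] cint[OF sT] continuous_on_const) auto
      fix x :: 'a assume "x \<in> sphere 0 1"
      then show "\<bar>(f x * u y x powr c - f x * u s x powr c) / (y - s)\<bar> \<le> Bd" using qbound yJ y by auto
    qed (use \<rho> in auto)
    have plim: "((\<lambda>y. (f x * u y x powr c - f x * u s x powr c) / (y - s)) \<longlongrightarrow> f x * (c * u s x powr (c - 1) * ut s x)) (at s)"
      if x: "x \<in> sphere 0 1" for x
      using pder[OF x, of s] s t1 by (auto simp: has_field_derivative_iff)
    have "((\<lambda>y. sphere_int (\<lambda>x. (f x * u y x powr c - f x * u s x powr c) / (y - s))) \<longlongrightarrow> Dv s) (at s)"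
      unfolding Dv_def by (rule sphere_int_tendsto[OF ev cdint[OF sT] plim])
    moreover have "eventually (\<lambda>y. sphere_int (\<lambda>x. (f x * u y x powr c - f x * u s x powr c) / (y - s)) = (Fi y - Fi s) / (y - s)) (at s)"
      unfolding eventually_at
    proof (intro exI[of _ \<rho>] conjI ballI impI)
      fix y assume y: "y \<noteq> s \<and> dist y s < \<rho>"
      then have yJ: "y \<in> J" by (auto simp: J_def dist_real_def)
      then have yT: "y \<in> {0..<T}" using JT by auto
      show "sphere_int (\<lambda>x. (f x * u y x powr c - f x * u s x powr c) / (y - s)) = (Fi y - Fi s) / (y - s)"
        using quot[OF yT sT] by simp
    qed (use \<rho> in auto)
    ultimately have "((\<lambda>y. (Fi y - Fi s) / (y - s)) \<longlongrightarrow> Dv s) (at s)"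
      by (rule Lim_transform_eventually)
    then show "(Fi has_real_derivative Dv s) (at s)" by (simp add: has_field_derivative_iff)
  qed
  have F0: "Fi 0 > 0" using assms(6) by (simp add: Fi_def)
  have T0: "(0::real) \<in> {0..<T}" using assms(4) by simp
  have Sf2: "sphere_int (\<lambda>x. (f x)^2) > 0"
  proof (rule ccontr)
    assume "\<not> sphere_int (\<lambda>x. (f x)^2) > 0"
    moreover have "0 * omega TYPE('a) \<le> sphere_int (\<lambda>x. (f x)^2)"
      using cf by (intro sphere_int_ge continuous_intros) auto
    ultimately have S0: "sphere_int (\<lambda>x. (f x)^2) = 0" by simp
    define v where "v x = u 0 x powr c" for x
    have cv: "continuous_on (sphere 0 1) v"
      unfolding v_def using cus[OF T0] pos[OF T0] by (intro continuous_intros) (auto simp: less_imp_neq[symmetric])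
    define Sv where "Sv = sphere_int (\<lambda>x. (v x)^2)"
    have Sv0: "0 \<le> Sv"
      using sphere_int_ge[of 0 "\<lambda>x. (v x)^2"] cv unfolding Sv_def by (auto intro!: continuous_intros)
    define \<epsilon> where "\<epsilon> = Fi 0 / (Sv + 1)"
    have \<epsilon>: "0 < \<epsilon>" using F0 Sv0 by (simp add: \<epsilon>_def)
    have pw: "f x * v x \<le> (1 / (2 * \<epsilon>)) * (f x)^2 + (\<epsilon> / 2) * (v x)^2" for x
    proof -
      have "0 \<le> (f x - \<epsilon> * v x)^2" by simp
      then have "2 * \<epsilon> * (f x * v x) \<le> (f x)^2 + \<epsilon>^2 * (v x)^2"
        by (simp add: power2_eq_square algebra_simps)
      then show ?thesis using \<epsilon> by (simp add: field_simps power2_eq_square)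
    qed
    have "Fi 0 = sphere_int (\<lambda>x. f x * v x)" by (simp add: Fi' v_def)
    also have "\<dots> \<le> sphere_int (\<lambda>x. (1 / (2 * \<epsilon>)) * (f x)^2 + (\<epsilon> / 2) * (v x)^2)"
      using pw cf cv by (intro sphere_int_mono continuous_intros) auto
    also have "\<dots> = (1 / (2 * \<epsilon>)) * sphere_int (\<lambda>x. (f x)^2) + (\<epsilon> / 2) * Sv"
    proof -
      have "sphere_int (\<lambda>x. (1 / (2 * \<epsilon>)) * (f x)^2 + (\<epsilon> / 2) * (v x)^2) =
            sphere_int (\<lambda>x. (1 / (2 * \<epsilon>)) * (f x)^2) + sphere_int (\<lambda>x. (\<epsilon> / 2) * (v x)^2)"
        using cf cv by (intro sphere_int_add continuous_intros)
      then show ?thesis unfolding Sv_def by (simp only: sphere_int_cmult)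
    qed
    also have "\<dots> = Fi 0 * (Sv / (2 * (Sv + 1)))" using S0 Sv0 by (simp add: \<epsilon>_def field_simps)
    also have "\<dots> < Fi 0 * 1" using F0 Sv0 by (intro mult_strict_left_mono) (auto simp: field_simps)
    finally show False by simp
  qed
  define Sf where "Sf = sphere_int (\<lambda>x. (f x)^2)"
  have Dlow: "\<And>t1 s m M Hb. t1 \<in> {0..<T} \<Longrightarrow> s \<in> {0<..<t1} \<Longrightarrow> Fi s > 0 \<Longrightarrow> 0 < m \<Longrightarrow>
      (\<forall>t\<in>{0..t1}. \<forall>x\<in>sphere 0 1. m \<le> u t x \<and> u t x \<le> M \<and> \<bar>mean_curv n (u t) x\<bar> \<le> Hb) \<Longrightarrow>
      (real n / 2) * (lam s * m powr c) * Sf + (- ((real n / 2) * (fb * Hb * M powr c))) * omega TYPE('a) \<le> Dv s"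
  proof -
    fix t1 s m M Hb assume t1: "t1 \<in> {0..<T}" and s: "s \<in> {0<..<t1}" and Fs: "Fi s > 0" and m: "0 < m"
      and mM: "\<forall>t\<in>{0..t1}. \<forall>x\<in>sphere 0 1. m \<le> u t x \<and> u t x \<le> M \<and> \<bar>mean_curv n (u t) x\<bar> \<le> Hb"
    have sT: "s \<in> {0..<T}" "s \<in> {0..t1}" using s t1 by auto
    have "m^2 \<le> energy n (u s)" using Elow[OF sT(1), of m] m mM sT(2) by auto
    then have E0: "0 \<le> energy n (u s)" by (meson order.trans zero_le_power2)
    have l0: "0 \<le> lam s" unfolding lam_eq using E0 omp Fs by auto
    have cc: "c * ((real n - 1) / 4) = real n / 2" using n1 by (simp add: c_def crit_exp_def field_simps)
    define A where "A = (real n / 2) * (lam s * m powr c)"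
    define B where "B = (real n / 2) * (fb * Hb * M powr c)"
    have pw: "A * (f x)^2 + (- B) \<le> f x * (c * u s x powr (c - 1) * ut s x)" if x: "x \<in> sphere 0 1" for x
    proof -
      have ub: "m \<le> u s x" "u s x \<le> M" "\<bar>mean_curv n (u s) x\<bar> \<le> Hb" using mM sT(2) x by auto
      have up: "0 < u s x" using ub m by linarith
      have pu: "u s x powr (c - 1) * u s x = u s x powr c"
      proof -
        have "u s x powr c = u s x powr ((c - 1) + 1)" by simp
        also have "\<dots> = u s x powr (c - 1) * u s x powr 1" by (rule powr_add)
        finally show ?thesis using up by simp
      qed
      have "f x * (c * u s x powr (c - 1) * ut s x) =
            (c * ((real n - 1) / 4)) * (u s x powr (c - 1) * u s x) * (lam s * (f x)^2 - f x * mean_curv n (u s) x)"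
      proof -
        have gen: "\<And>(f::real) c P k H l u. f * (c * P * (- k / 4 * (H - l * f) * u)) = (c * (k / 4)) * (P * u) * (l * f^2 - f * H)"
          by (simp add: power2_eq_square field_simps)
        show ?thesis unfolding ut_def by (rule gen)
      qed
      also have "\<dots> = (real n / 2) * (lam s * (f x)^2 * u s x powr c) - (real n / 2) * (f x * mean_curv n (u s) x * u s x powr c)"
        unfolding cc pu by (simp add: algebra_simps)
      finally have eq: "f x * (c * u s x powr (c - 1) * ut s x) = (real n / 2) * (lam s * (f x)^2 * u s x powr c) - (real n / 2) * (f x * mean_curv n (u s) x * u s x powr c)" .
      have mc: "m powr c \<le> u s x powr c" using m ub c_pos by (intro powr_mono2) auto
      have Mc: "u s x powr c \<le> M powr c" using up ub c_pos by (intro powr_mono2) auto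
      have i1: "lam s * m powr c * (f x)^2 \<le> lam s * (f x)^2 * u s x powr c"
      proof -
        have "lam s * m powr c * (f x)^2 \<le> lam s * u s x powr c * (f x)^2"
          using l0 mc by (intro mult_right_mono mult_left_mono) auto
        then show ?thesis by (simp add: algebra_simps)
      qed
      have "\<bar>f x * mean_curv n (u s) x * u s x powr c\<bar> = \<bar>f x\<bar> * \<bar>mean_curv n (u s) x\<bar> * u s x powr c"
        by (simp add: abs_mult)
      also have "\<dots> \<le> fb * Hb * M powr c"
        using fb x ub(3) Mc fb0 by (intro mult_mono) auto
      finally have i2: "f x * mean_curv n (u s) x * u s x powr c \<le> fb * Hb * M powr c" by simp
      have "lam s * m powr c * (f x)^2 - fb * Hb * M powr c \<le> lam s * (f x)^2 * u s x powr c - f x * mean_curv n (u s) x * u s x powr c"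
        using i1 i2 by linarith
      then have "(real n / 2) * (lam s * m powr c * (f x)^2 - fb * Hb * M powr c) \<le> (real n / 2) * (lam s * (f x)^2 * u s x powr c - f x * mean_curv n (u s) x * u s x powr c)"
        by (intro mult_left_mono) auto
      then show ?thesis unfolding eq A_def B_def by (simp add: algebra_simps)
    qed
    have "sphere_int (\<lambda>x. A * (f x)^2 + (- B)) = A * Sf + (- B) * omega TYPE('a)"
    proof -
      have "sphere_int (\<lambda>x. A * (f x)^2 + (- B)) = sphere_int (\<lambda>x. A * (f x)^2) + sphere_int (\<lambda>x::'a. - B)"
        using cf by (intro sphere_int_add continuous_intros)
      then show ?thesis unfolding Sf_def by (simp only: sphere_int_cmult sphere_int_const)
    qed
    moreover have "sphere_int (\<lambda>x. A * (f x)^2 + (- B)) \<le> Dv s"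
      unfolding Dv_def by (rule sphere_int_mono[OF pw _ cdint[OF sT(1)]]) (auto intro!: continuous_intros cf)
    ultimately show "(real n / 2) * (lam s * m powr c) * Sf + (- ((real n / 2) * (fb * Hb * M powr c))) * omega TYPE('a) \<le> Dv s"
      unfolding A_def B_def by simp
  qed
  have Sfp: "Sf > 0" using Sf2 by (simp add: Sf_def)
  show ?thesis
  proof (rule ccontr)
    assume "\<not> (\<forall>t\<in>{0..<T}. f_integral n f (u t) > 0)"
    then obtain tb where tb: "tb \<in> {0..<T}" "Fi tb \<le> 0" by (auto simp: Fi_def not_less)
    define Z where "Z = {t \<in> {0..tb}. Fi t \<le> 0}"
    have cZ: "closed Z" unfolding Z_def
      using tb(1) by (intro continuous_on_closed_Collect_le continuous_on_subset[OF cFiT] continuous_on_const) auto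
    have Zne: "Z \<noteq> {}" using tb by (auto simp: Z_def)
    have Zb: "bdd_below Z" by (auto simp: Z_def bdd_below_def)
    define t1 where "t1 = Inf Z"
    have t1Z: "t1 \<in> Z" unfolding t1_def by (rule closed_contains_Inf[OF Zne Zb cZ])
    have t1T: "t1 \<in> {0..<T}" using t1Z tb(1) by (auto simp: Z_def)
    have Ft1: "Fi t1 \<le> 0" using t1Z by (auto simp: Z_def)
    have t1p: "t1 > 0" using t1Z F0 by (auto simp: Z_def less_le)
    have Fpos: "\<forall>t\<in>{0..<t1}. Fi t > 0"
    proof
      fix t assume t: "t \<in> {0..<t1}"
      show "Fi t > 0"
      proof (rule ccontr)
        assume "\<not> Fi t > 0"
        then have "t \<in> Z" using t t1Z by (auto simp: Z_def)
        then have "t1 \<le> t" unfolding t1_def using Zb by (rule cInf_lower)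
        then show False using t by auto
      qed
    qed
    obtain m M Hb Gb where mM: "0 < m" "\<forall>t\<in>{0..t1}. \<forall>x\<in>sphere 0 1. m \<le> u t x \<and> u t x \<le> M \<and> \<bar>mean_curv n (u t) x\<bar> \<le> Hb"
      using bnds[OF t1T] by blast
    define K0 where "K0 = fb * Hb * M powr c * omega TYPE('a)"
    have K0: "0 \<le> K0"
    proof -
      obtain b :: 'a where "b \<in> Basis" using nonempty_Basis by blast
      then have "b \<in> sphere 0 1" by auto
      then have "\<bar>mean_curv n (u t1) b\<bar> \<le> Hb" using mM(2) t1T by auto
      then have "0 \<le> Hb" by linarith
      then show ?thesis unfolding K0_def using fb0 omp by auto
    qed
    define thr where "thr = m^2 * omega TYPE('a) * m powr c * Sf / (K0 + 1)"
    have thr: "0 < thr" unfolding thr_def using mM(1) omp Sfp K0 by auto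
    have "eventually (\<lambda>y. Fi y < thr) (at t1 within {0..<T})"
      using order_tendstoD(2)[OF cFi[OF t1T, unfolded continuous_within], of thr] Ft1 thr by auto
    then obtain d where d: "d > 0" "\<And>y. y \<in> {0..<T} \<Longrightarrow> y \<noteq> t1 \<and> dist y t1 < d \<Longrightarrow> Fi y < thr"
      unfolding eventually_at by blast
    define s0 where "s0 = max (t1 - d / 2) (t1 / 2)"
    have s0: "0 < s0" "s0 < t1" using t1p d by (auto simp: s0_def)
    have "Fi s0 < Fi t1"
    proof (rule DERIV_pos_imp_increasing_open[OF s0(2)])
      show "continuous_on {s0..t1} Fi"
        using s0 t1T by (intro continuous_on_subset[OF cFiT]) auto
      fix \<sigma> assume \<sigma>: "s0 < \<sigma>" "\<sigma> < t1"
      have \<sigma>': "\<sigma> \<in> {0<..<t1}" using \<sigma> s0 by auto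
      have Fs: "Fi \<sigma> > 0" using Fpos \<sigma>' by auto
      have Ft: "Fi \<sigma> < thr" using d(2)[of \<sigma>] \<sigma> t1T s0 unfolding s0_def dist_real_def by auto
      have "m^2 \<le> energy n (u \<sigma>)" using Elow[of \<sigma> m] mM \<sigma>' t1T by auto
      then have "m^2 * omega TYPE('a) / Fi \<sigma> \<le> lam \<sigma>"
        unfolding lam_eq using omp Fs by (intro divide_right_mono mult_right_mono) auto
      moreover have "K0 + 1 < m^2 * omega TYPE('a) / Fi \<sigma> * (m powr c * Sf)"
      proof -
        have "(K0 + 1) * Fi \<sigma> < (K0 + 1) * thr" using Ft K0 by (intro mult_strict_left_mono) auto
        also have "\<dots> = m^2 * omega TYPE('a) * m powr c * Sf" unfolding thr_def using K0 by simp
        finally show ?thesis using Fs by (simp add: field_simps)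
      qed
      moreover have "0 \<le> m powr c * Sf" using Sfp by simp
      ultimately have "K0 + 1 < lam \<sigma> * (m powr c * Sf)"
        using mult_right_mono[of "m^2 * omega TYPE('a) / Fi \<sigma>" "lam \<sigma>" "m powr c * Sf"] by linarith
      then have pos': "0 < (real n / 2) * (lam \<sigma> * m powr c) * Sf + (- ((real n / 2) * (fb * Hb * M powr c))) * omega TYPE('a)"
        using assms(1) unfolding K0_def by (simp add: algebra_simps)
      show "\<exists>y. DERIV Fi \<sigma> :> y \<and> 0 < y"
        using deriv[OF t1T Fpos \<sigma>'] Dlow[OF t1T \<sigma>' Fs mM(1) mM(2)] pos' by force
    qed
    moreover have "Fi s0 > 0" using Fpos s0 by auto
    ultimately show False using Ft1 by linarith
  qed
qed

end
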